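(* Let $\Omega\subset\mathbb R^d$ be a bounded open set, $L>0$, $n\in\mathbb Z_+$, $X=\overline\Omega\times[-L,L]^n$, $\varepsilon>0$, $N\in\mathbb N$, and points $\bar x_1,\dots,\bar x_N\in\Omega$. Suppose $G_n,G:\mathcal P(X)\to\mathcal P(X)$ satisfy $\lim_{n\to\infty}W_1(G_n(\mu),G(\mu))=0$ for all $\mu\in\mathcal P(X)$. Then for each $h\in C(\overline\Omega;[-L,L]^n)$, $$\mathbf F_\varepsilon\circ G\circ\mathbf M_N(h)=\lim_{n\to\infty}\mathbf F_\varepsilon\circ G_n\circ\mathbf M_N(h),$$ with convergence in $C(\overline\Omega;\mathbb R^n)$ (hence also in $H^{-s}(\Omega;\mathbb R^n)$ for every $s\ge0$). The same holds with $(G_n)_n$ replaced by a family $(G_\eta)_{\eta>0}$ and $n\to\infty$ replaced by $\eta\to0$.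
   Context: $\mathcal P(X)$: Borel probability measures with the $W_1$ metric. $\mathbf M_N(h)=\frac1N\sum_{j=1}^N\delta_{(\bar x_j,h(\bar x_j))}$. With $\rho\in C_c^\infty(\mathbb R^d)$ a mollifier ($\int\rho=1$, $\mathrm{supp}\,\rho\subset B(0,1)$, $\rho$ even), $(\mathbf F_\varepsilon\gamma)(x)=\frac{\mathrm{vol}(\Omega)}{\varepsilon^d}\int_X\rho(\frac{x'-x}{\varepsilon})\,y'\,d\gamma(x',y')$, $x\in\overline\Omega$. *)

theory Defs
  imports "HOL-Probability.Probability"
begin

text \<open>C-infinity smoothness of a real function on R^d: differentiable everywhere and all
  first-order partial derivatives are again smooth (coinductively: partial derivatives of
  every order exist and are differentiable).\<close>
coinductive smooth_fun :: "(real^'d \<Rightarrow> real) \<Rightarrow> bool" where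
  "(\<forall>x. f differentiable (at x)) \<Longrightarrow>
   (\<forall>i. smooth_fun (\<lambda>x. frechet_derivative f (at x) (axis i 1))) \<Longrightarrow> smooth_fun f"

definition mollifier :: "(real^'d \<Rightarrow> real) \<Rightarrow> bool" where
  "mollifier \<rho> \<longleftrightarrow> smooth_fun \<rho> \<and> compact (closure {x. \<rho> x \<noteq> 0})
     \<and> closure {x. \<rho> x \<noteq> 0} \<subseteq> ball 0 1 \<and> (\<rho> has_integral 1) UNIV \<and> (\<forall>x. \<rho> (-x) = \<rho> x)"

definition Lbox :: "real \<Rightarrow> (real^'n) set" where
  "Lbox L = {y. \<forall>i. -L \<le> y $ i \<and> y $ i \<le> L}"

definition Xset :: "(real^'d) set \<Rightarrow> real \<Rightarrow> ((real^'d) \<times> (real^'n)) set" where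
  "Xset \<Omega> L = closure \<Omega> \<times> Lbox L"

text \<open>Borel probability measures on X (realised as Borel probability measures on the ambient
  Euclidean space R^d x R^n concentrated on X).\<close>
definition Prob :: "('a::topological_space) set \<Rightarrow> 'a measure set" where
  "Prob X = {\<mu>. sets \<mu> = sets borel \<and> prob_space \<mu> \<and> emeasure \<mu> X = 1}"

definition couplings :: "('a::topological_space) measure \<Rightarrow> 'a measure \<Rightarrow> ('a \<times> 'a) measure set" where
  "couplings \<mu> \<nu> = {\<pi>. sets \<pi> = sets borel \<and> prob_space \<pi>
      \<and> distr \<pi> borel fst = \<mu> \<and> distr \<pi> borel snd = \<nu>}"

definition W1 :: "('a::metric_space) measure \<Rightarrow> 'a measure \<Rightarrow> ennreal" where
  "W1 \<mu> \<nu> = (INF \<pi>\<in>couplings \<mu> \<nu>. \<integral>\<^sup>+ p. ennreal (dist (fst p) (snd p)) \<partial>\<pi>)"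

definition empirical :: "nat \<Rightarrow> (nat \<Rightarrow> real^'d) \<Rightarrow> (real^'d \<Rightarrow> real^'n)
     \<Rightarrow> ((real^'d) \<times> (real^'n)) measure" where
  "empirical N xb h = measure_of UNIV (sets borel)
     (\<lambda>A. (\<Sum>j\<in>{1..N}. emeasure (return borel (xb j, h (xb j))) A) / of_nat N)"

definition Feps :: "(real^'d \<Rightarrow> real) \<Rightarrow> (real^'d) set \<Rightarrow> real \<Rightarrow> ((real^'d) \<times> (real^'n)) measure
     \<Rightarrow> real^'d \<Rightarrow> real^'n" where
  "Feps \<rho> \<Omega> \<epsilon> \<gamma> x = (measure lborel \<Omega> / \<epsilon> ^ CARD('d)) *\<^sub>R
     (\<integral>p. \<rho> ((1/\<epsilon>) *\<^sub>R (fst p - x)) *\<^sub>R snd p \<partial>\<gamma>)"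

end

theory Submission
  imports Defs
begin

lemma rho_basic:
  fixes \<rho> :: "real^'d \<Rightarrow> real"
  assumes "mollifier \<rho>"
  shows "continuous_on UNIV \<rho>" and "\<And>y. norm y \<ge> 1 \<Longrightarrow> \<rho> y = 0"
proof -
  have "smooth_fun \<rho>" using assms unfolding mollifier_def by blast
  then have "\<forall>x. \<rho> differentiable (at x)" by (cases rule: smooth_fun.cases) auto
  then show "continuous_on UNIV \<rho>"
    by (simp add: continuous_at_imp_continuous_on differentiable_imp_continuous_within)
  fix y :: "real^'d" assume "norm y \<ge> 1"
  have "closure {x. \<rho> x \<noteq> 0} \<subseteq> ball 0 1" using assms unfolding mollifier_def by blast
  then have "y \<notin> closure {x. \<rho> x \<noteq> 0}" using \<open>norm y \<ge> 1\<close> mem_ball_0[of y 1] by (meson linorder_not_less subsetD)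
  then show "\<rho> y = 0" using closure_subset[of "{x. \<rho> x \<noteq> 0}"] by (metis (mono_tags, lifting) mem_Collect_eq subsetD)
qed

lemma rho_bounded:
  fixes \<rho> :: "real^'d \<Rightarrow> real"
  assumes "mollifier \<rho>"
  shows "\<exists>M\<ge>0. \<forall>y. \<bar>\<rho> y\<bar> \<le> M"
proof -
  have c: "continuous_on (cball 0 1) \<rho>"
    using rho_basic(1)[OF assms] continuous_on_subset by blast
  obtain M where M: "\<forall>y\<in>cball 0 1. norm (\<rho> y) \<le> M"
    using compact_imp_bounded[OF compact_continuous_image[OF c compact_cball]]
    unfolding bounded_iff by auto
  have "\<forall>y. \<bar>\<rho> y\<bar> \<le> max M 0"
  proof
    fix y :: "real^'d"
    show "\<bar>\<rho> y\<bar> \<le> max M 0"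
    proof (cases "norm y \<le> 1")
      case True then have "norm (\<rho> y) \<le> M" using M by (simp add: dist_norm)
      then show ?thesis by simp
    next
      case False then show ?thesis using rho_basic(2)[OF assms, of y] by auto
    qed
  qed
  then show ?thesis by (intro exI[of _ "max M 0"]) auto
qed

lemma rho_unif:
  fixes \<rho> :: "real^'d \<Rightarrow> real"
  assumes "mollifier \<rho>" and "e > 0"
  shows "\<exists>d>0. \<forall>a b. dist a b < d \<longrightarrow> \<bar>\<rho> a - \<rho> b\<bar> < e"
proof -
  have c: "continuous_on (cball 0 2) \<rho>"
    using rho_basic(1)[OF assms(1)] continuous_on_subset by blast
  then have "uniformly_continuous_on (cball 0 2) \<rho>"
    using compact_uniformly_continuous compact_cball by blast
  then obtain d where d: "d > 0" "\<forall>a\<in>cball 0 2. \<forall>b\<in>cball 0 2. dist b a < d \<longrightarrow> dist (\<rho> b) (\<rho> a) < e"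
    unfolding uniformly_continuous_on_def using assms(2) by metis
  have "\<forall>a b. dist a b < min d 1 \<longrightarrow> \<bar>\<rho> a - \<rho> b\<bar> < e"
  proof (intro allI impI)
    fix a b :: "real^'d" assume ab: "dist a b < min d 1"
    show "\<bar>\<rho> a - \<rho> b\<bar> < e"
    proof (cases "norm a \<le> 1 \<or> norm b \<le> 1")
      case True
      have nab: "norm (a - b) < 1" using ab by (simp add: dist_norm)
      have "norm a \<le> norm (a - b) + norm b" "norm b \<le> norm (a - b) + norm a"
        using norm_triangle_ineq[of "a - b" b] norm_triangle_ineq[of "b - a" a] norm_minus_commute[of a b]
        by auto
      then have "norm a \<le> 2" "norm b \<le> 2" using True nab by linarith+
      then show ?thesis using d ab by (auto simp: dist_real_def dist_commute)
    next
      case False then show ?thesis using rho_basic(2)[OF assms(1)] assms(2) by auto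
    qed
  qed
  then show ?thesis using d(1) by (intro exI[of _ "min d 1"]) auto
qed

lemma rho_lipish:
  fixes \<rho> :: "real^'d \<Rightarrow> real"
  assumes "mollifier \<rho>" and "e > 0"
  shows "\<exists>K\<ge>0. \<forall>a b. \<bar>\<rho> a - \<rho> b\<bar> \<le> e + K * dist a b"
proof -
  obtain M where M: "M \<ge> 0" "\<forall>y. \<bar>\<rho> y\<bar> \<le> M" using rho_bounded[OF assms(1)] by blast
  obtain d where d: "d > 0" "\<forall>a b. dist a b < d \<longrightarrow> \<bar>\<rho> a - \<rho> b\<bar> < e"
    using rho_unif[OF assms] by blast
  have "\<forall>a b. \<bar>\<rho> a - \<rho> b\<bar> \<le> e + (2*M/d) * dist a b"
  proof (intro allI)
    fix a b :: "real^'d"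
    show "\<bar>\<rho> a - \<rho> b\<bar> \<le> e + (2*M/d) * dist a b"
    proof (cases "dist a b < d")
      case True
      have "0 \<le> (2*M/d) * dist a b" using d M by simp
      then show ?thesis using d True by force
    next
      case False
      have "2*M \<le> (2*M/d) * dist a b"
      proof -
        have "(2*M/d) * d \<le> (2*M/d) * dist a b" using False M d by (intro mult_left_mono) auto
        then show ?thesis using d by simp
      qed
      moreover have "\<bar>\<rho> a - \<rho> b\<bar> \<le> 2*M" using M(2)[rule_format, of a] M(2)[rule_format, of b] by linarith
      ultimately show ?thesis using assms(2) by linarith
    qed
  qed
  then show ?thesis using M d by (intro exI[of _ "2*M/d"]) auto
qed

lemma empirical_Prob:
  fixes xb :: "nat \<Rightarrow> real^'d" and h :: "real^'d \<Rightarrow> real^'n"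
    and X :: "((real^'d) \<times> (real^'n)) set"
  assumes N: "N \<ge> 1" and pts: "\<forall>j\<in>{1..N}. (xb j, h (xb j)) \<in> X" and X: "X \<in> sets borel"
  shows "empirical N xb h \<in> Prob X"
proof -
  define \<mu> where "\<mu> = (\<lambda>A. (\<Sum>j\<in>{1..N}. emeasure (return borel (xb j, h (xb j))) A) / (of_nat N :: ennreal))"
  have emp: "empirical N xb h = measure_of UNIV (sets borel) \<mu>"
    unfolding empirical_def \<mu>_def by simp
  have sa: "sigma_algebra UNIV (sets borel)" by (metis sets.sigma_algebra_axioms space_borel)
  have pos: "positive (sets borel) \<mu>" unfolding positive_def \<mu>_def by simp
  have ca: "countably_additive (sets borel) \<mu>"
    unfolding countably_additive_def
  proof (intro allI impI)
    fix A :: "nat \<Rightarrow> ((real^'d) \<times> (real^'n)) set"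
    assume A: "range A \<subseteq> sets borel" "disjoint_family A"
    have "(\<Sum>i. \<mu> (A i)) = (\<Sum>i. \<Sum>j\<in>{1..N}. emeasure (return borel (xb j, h (xb j))) (A i)) / of_nat N"
      unfolding \<mu>_def by (rule ennreal_suminf_divide)
    also have "\<dots> = (\<Sum>j\<in>{1..N}. \<Sum>i. emeasure (return borel (xb j, h (xb j))) (A i)) / of_nat N"
      by (subst suminf_sum) (auto intro: summableI)
    also have "\<dots> = (\<Sum>j\<in>{1..N}. emeasure (return borel (xb j, h (xb j))) (\<Union> (range A))) / of_nat N"
      using A by (subst suminf_emeasure) (auto simp: sets_return)
    finally show "(\<Sum>i. \<mu> (A i)) = \<mu> (\<Union> (range A))" unfolding \<mu>_def .
  qed
  have em: "emeasure (empirical N xb h) B = \<mu> B" if "B \<in> sets borel" for B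
    unfolding emp using emeasure_measure_of_sigma[OF sa pos ca that] .
  have sets: "sets (empirical N xb h) = sets borel"
    unfolding emp by (metis sets_measure_of sets.sigma_sets_eq space_borel sets.space_closed)
  have space: "space (empirical N xb h) = UNIV"
    unfolding emp by (simp add: space_measure_of_conv)
  have one: "\<mu> B = 1" if "B \<in> sets borel" "X \<subseteq> B" for B
  proof -
    have "\<mu> B = (\<Sum>j\<in>{1..N}. 1) / (of_nat N :: ennreal)"
      unfolding \<mu>_def using that pts by (intro arg_cong2[where f="(/)"] sum.cong refl) (auto simp: emeasure_return indicator_def subset_iff)
    also have "\<dots> = 1" using N by (simp, intro ennreal_divide_self) (auto simp: of_nat_less_top)
    finally show ?thesis .
  qed
  have "emeasure (empirical N xb h) (space (empirical N xb h)) = 1"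
    unfolding space by (simp add: em one)
  then have "prob_space (empirical N xb h)" by (rule prob_spaceI)
  moreover have "emeasure (empirical N xb h) X = 1" using X by (simp add: em one)
  ultimately show ?thesis unfolding Prob_def using sets by blast
qed


lemma meas_sets_borel:
  assumes "sets M = sets borel" and "f \<in> borel_measurable borel"
  shows "f \<in> borel_measurable M"
  using assms measurable_cong_sets[OF assms(1) refl, of borel] by simp

lemma coupling_bound:
  fixes f :: "'a::metric_space \<Rightarrow> 'b::{banach, second_countable_topology}"
  assumes n1: "\<nu>1 \<in> Prob X" and n2: "\<nu>2 \<in> Prob X" and X: "X \<in> sets borel"
    and fm: "f \<in> borel_measurable borel"
    and bnd: "\<forall>p\<in>X. norm (f p) \<le> B"
    and lip: "\<forall>p\<in>X. \<forall>q\<in>X. norm (f p - f q) \<le> e + K * dist p q"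
    and e: "e \<ge> 0" and K: "K \<ge> 0"
    and pi: "\<pi> \<in> couplings \<nu>1 \<nu>2"
  shows "ennreal (norm (integral\<^sup>L \<nu>1 f - integral\<^sup>L \<nu>2 f))
           \<le> ennreal e + ennreal K * (\<integral>\<^sup>+ p. ennreal (dist (fst p) (snd p)) \<partial>\<pi>)"
proof -
  have spi: "sets \<pi> = sets borel" and ppi: "prob_space \<pi>"
    and d1: "distr \<pi> borel fst = \<nu>1" and d2: "distr \<pi> borel snd = \<nu>2"
    using pi unfolding couplings_def by auto
  have s1: "sets \<nu>1 = sets borel" and p1: "prob_space \<nu>1" and e1: "emeasure \<nu>1 X = 1"
    using n1 unfolding Prob_def by auto
  have s2: "sets \<nu>2 = sets borel" and p2: "prob_space \<nu>2" and e2: "emeasure \<nu>2 X = 1"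
    using n2 unfolding Prob_def by auto
  have mfst: "fst \<in> measurable \<pi> borel"
    by (rule meas_sets_borel[OF spi borel_measurable_continuous_onI[OF continuous_on_fst[OF continuous_on_id]]])
  have msnd: "snd \<in> measurable \<pi> borel"
    by (rule meas_sets_borel[OF spi borel_measurable_continuous_onI[OF continuous_on_snd[OF continuous_on_id]]])
  have AE1: "AE p in \<nu>1. p \<in> X"
    using prob_space.AE_prob_1[OF p1, of X] e1 by (simp add: measure_def)
  have AE2: "AE p in \<nu>2. p \<in> X"
    using prob_space.AE_prob_1[OF p2, of X] e2 by (simp add: measure_def)
  have fm1: "f \<in> borel_measurable \<nu>1" by (rule meas_sets_borel[OF s1 fm])
  have fm2: "f \<in> borel_measurable \<nu>2" by (rule meas_sets_borel[OF s2 fm])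
  have i1: "integrable \<nu>1 f"
    using finite_measure.integrable_const_bound[OF prob_space.finite_measure[OF p1] _ fm1, of B]
      AE1 bnd by (metis (mono_tags, lifting) eventually_mono)
  have i2: "integrable \<nu>2 f"
    using finite_measure.integrable_const_bound[OF prob_space.finite_measure[OF p2] _ fm2, of B]
      AE2 bnd by (metis (mono_tags, lifting) eventually_mono)
  have ip1: "integrable \<pi> (\<lambda>p. f (fst p))"
    using integrable_distr_eq[OF mfst fm] i1 d1 by simp
  have ip2: "integrable \<pi> (\<lambda>p. f (snd p))"
    using integrable_distr_eq[OF msnd fm] i2 d2 by simp
  have I1: "integral\<^sup>L \<nu>1 f = integral\<^sup>L \<pi> (\<lambda>p. f (fst p))"
    using integral_distr[OF mfst fm] d1 by simp
  have I2: "integral\<^sup>L \<nu>2 f = integral\<^sup>L \<pi> (\<lambda>p. f (snd p))"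
    using integral_distr[OF msnd fm] d2 by simp
  have AEp1: "AE p in \<pi>. fst p \<in> X" using AE_distrD[OF mfst, of "\<lambda>p. p \<in> X"] AE1 d1 by metis
  have AEp2: "AE p in \<pi>. snd p \<in> X" using AE_distrD[OF msnd, of "\<lambda>p. p \<in> X"] AE2 d2 by metis
  have mdist: "(\<lambda>p. dist (fst p) (snd p)) \<in> borel_measurable \<pi>"
    by (rule meas_sets_borel[OF spi borel_measurable_continuous_onI])
      (intro continuous_intros)
  have mdiste: "(\<lambda>p. ennreal (dist (fst p) (snd p))) \<in> borel_measurable \<pi>"
    using measurable_compose[OF mdist measurable_ennreal] by (simp add: comp_def)
  have mdist': "(\<lambda>p. ennreal K * ennreal (dist (fst p) (snd p))) \<in> borel_measurable \<pi>"
    using borel_measurable_times_ennreal[OF borel_measurable_const mdiste] by simp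
  have "ennreal (norm (integral\<^sup>L \<nu>1 f - integral\<^sup>L \<nu>2 f))
      = ennreal (norm (integral\<^sup>L \<pi> (\<lambda>p. f (fst p) - f (snd p))))"
    unfolding I1 I2 using ip1 ip2 by simp
  also have "\<dots> \<le> (\<integral>\<^sup>+ p. ennreal (norm (f (fst p) - f (snd p))) \<partial>\<pi>)"
    using ip1 ip2 by (intro integral_norm_bound_ennreal) simp
  also have "\<dots> \<le> (\<integral>\<^sup>+ p. ennreal e + ennreal K * ennreal (dist (fst p) (snd p)) \<partial>\<pi>)"
  proof (rule nn_integral_mono_AE)
    show "AE p in \<pi>. ennreal (norm (f (fst p) - f (snd p))) \<le> ennreal e + ennreal K * ennreal (dist (fst p) (snd p))"
      using AEp1 AEp2
    proof eventually_elim
      case (elim p)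
      then have "norm (f (fst p) - f (snd p)) \<le> e + K * dist (fst p) (snd p)" using lip by blast
      then have "ennreal (norm (f (fst p) - f (snd p))) \<le> ennreal (e + K * dist (fst p) (snd p))"
        by (rule ennreal_leI)
      also have "\<dots> = ennreal e + ennreal K * ennreal (dist (fst p) (snd p))"
        using e K by (simp add: ennreal_plus ennreal_mult)
      finally show ?case .
    qed
  qed
  also have "\<dots> = (\<integral>\<^sup>+ p. ennreal e \<partial>\<pi>) + (\<integral>\<^sup>+ p. ennreal K * ennreal (dist (fst p) (snd p)) \<partial>\<pi>)"
    by (rule nn_integral_add) (auto simp: mdist')
  also have "\<dots> = ennreal e + ennreal K * (\<integral>\<^sup>+ p. ennreal (dist (fst p) (snd p)) \<partial>\<pi>)"
    using mdiste prob_space.emeasure_space_1[OF ppi] by (simp add: nn_integral_cmult)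
  finally show ?thesis .
qed


lemma Lbox_norm:
  fixes y :: "real^'n"
  assumes "y \<in> Lbox L"
  shows "norm y \<le> real CARD('n) * L"
proof -
  have "norm y \<le> (\<Sum>i\<in>UNIV. \<bar>y $ i\<bar>)" by (rule norm_le_l1_cart)
  also have "\<dots> \<le> of_nat (card (UNIV::'n set)) * L"
  proof (rule sum_bounded_above)
    fix i :: 'n
    have "-L \<le> y $ i \<and> y $ i \<le> L" using assms by (simp add: Lbox_def)
    then show "\<bar>y $ i\<bar> \<le> L" by linarith
  qed
  finally show ?thesis by simp
qed

lemma Xset_closed: "closed (Xset \<Omega> L :: ((real^'d) \<times> (real^'n)) set)"
proof -
  have "(Lbox L :: (real^'n) set) = (\<Inter>i. {y. -L \<le> y $ i} \<inter> {y. y $ i \<le> L})" unfolding Lbox_def by auto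
  moreover have "closed (\<Inter>i. {y::real^'n. -L \<le> y $ i} \<inter> {y. y $ i \<le> L})"
    by (intro closed_INT ballI closed_Int closed_Collect_le continuous_intros)
  ultimately have "closed (Lbox L :: (real^'n) set)" by simp
  then show ?thesis unfolding Xset_def by (intro closed_Times) auto
qed

lemma f_props:
  fixes \<rho> :: "real^'d \<Rightarrow> real" and \<Omega> :: "(real^'d) set"
  assumes rho: "mollifier \<rho>" and eps: "\<epsilon> > 0" and L: "L \<ge> 0" and e: "e > 0"
  shows "\<exists>K\<ge>0. \<forall>x. \<forall>p\<in>Xset \<Omega> L. \<forall>q\<in>(Xset \<Omega> L :: ((real^'d) \<times> (real^'n)) set).
           norm (\<rho> ((1/\<epsilon>) *\<^sub>R (fst p - x)) *\<^sub>R snd p - \<rho> ((1/\<epsilon>) *\<^sub>R (fst q - x)) *\<^sub>R snd q)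
             \<le> e + K * dist p q"
proof -
  define Bq where "Bq = real CARD('n) * L"
  have Bq: "Bq \<ge> 0" unfolding Bq_def using L by simp
  obtain M where M: "M \<ge> 0" "\<forall>y. \<bar>\<rho> y\<bar> \<le> M" using rho_bounded[OF rho] by blast
  define e1 where "e1 = e / (Bq + 1)"
  have e1: "e1 > 0" unfolding e1_def using e Bq by simp
  have e1B: "e1 * Bq \<le> e"
  proof -
    have "e1 * Bq \<le> e1 * (Bq + 1)" using e1 by simp
    also have "\<dots> = e" unfolding e1_def using Bq by simp
    finally show ?thesis .
  qed
  obtain K1 where K1: "K1 \<ge> 0" "\<forall>a b. \<bar>\<rho> a - \<rho> b\<bar> \<le> e1 + K1 * dist a b"
    using rho_lipish[OF rho e1] by blast
  define K where "K = M + K1 * Bq / \<epsilon>"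
  have K: "K \<ge> 0" unfolding K_def using M K1 Bq eps by simp
  have "\<forall>x. \<forall>p\<in>Xset \<Omega> L. \<forall>q\<in>(Xset \<Omega> L :: ((real^'d) \<times> (real^'n)) set).
           norm (\<rho> ((1/\<epsilon>) *\<^sub>R (fst p - x)) *\<^sub>R snd p - \<rho> ((1/\<epsilon>) *\<^sub>R (fst q - x)) *\<^sub>R snd q)
             \<le> e + K * dist p q"
  proof (intro allI ballI)
    fix x :: "real^'d" and p q :: "(real^'d) \<times> (real^'n)"
    assume p: "p \<in> Xset \<Omega> L" and q: "q \<in> Xset \<Omega> L"
    define a where "a = (1/\<epsilon>) *\<^sub>R (fst p - x)"
    define b where "b = (1/\<epsilon>) *\<^sub>R (fst q - x)"
    have nq: "norm (snd q) \<le> Bq" unfolding Bq_def using q by (intro Lbox_norm) (auto simp: Xset_def)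
    have dab: "dist a b = dist (fst p) (fst q) / \<epsilon>"
    proof -
      have "a - b = (1/\<epsilon>) *\<^sub>R (fst p - fst q)" unfolding a_def b_def by (simp add: algebra_simps)
      then show ?thesis using eps by (simp add: dist_norm)
    qed
    have dab2: "dist a b \<le> dist p q / \<epsilon>"
      unfolding dab using eps dist_fst_le[of p q] by (simp add: divide_right_mono)
    have eq: "\<rho> a *\<^sub>R snd p - \<rho> b *\<^sub>R snd q = \<rho> a *\<^sub>R (snd p - snd q) + (\<rho> a - \<rho> b) *\<^sub>R snd q"
      by (simp add: algebra_simps)
    have "norm (\<rho> a *\<^sub>R snd p - \<rho> b *\<^sub>R snd q) \<le> norm (\<rho> a *\<^sub>R (snd p - snd q)) + norm ((\<rho> a - \<rho> b) *\<^sub>R snd q)"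
      unfolding eq by (rule norm_triangle_ineq)
    also have "\<dots> = \<bar>\<rho> a\<bar> * dist (snd p) (snd q) + \<bar>\<rho> a - \<rho> b\<bar> * norm (snd q)"
      by (simp add: dist_norm)
    also have "\<dots> \<le> M * dist p q + (e1 + K1 * (dist p q / \<epsilon>)) * Bq"
    proof (rule add_mono)
      show "\<bar>\<rho> a\<bar> * dist (snd p) (snd q) \<le> M * dist p q"
        using M dist_snd_le[of p q] by (intro mult_mono) auto
      have "\<bar>\<rho> a - \<rho> b\<bar> \<le> e1 + K1 * (dist p q / \<epsilon>)"
        using K1(2)[rule_format, of a b] mult_left_mono[OF dab2 K1(1)] by linarith
      then show "\<bar>\<rho> a - \<rho> b\<bar> * norm (snd q) \<le> (e1 + K1 * (dist p q / \<epsilon>)) * Bq"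
        using nq e1 K1 eps by (intro mult_mono) auto
    qed
    also have "\<dots> = e1 * Bq + K * dist p q"
      unfolding K_def by (simp add: algebra_simps)
    also have "\<dots> \<le> e + K * dist p q" using e1B by simp
    finally show "norm (\<rho> ((1/\<epsilon>) *\<^sub>R (fst p - x)) *\<^sub>R snd p - \<rho> ((1/\<epsilon>) *\<^sub>R (fst q - x)) *\<^sub>R snd q)
             \<le> e + K * dist p q" unfolding a_def b_def .
  qed
  then show ?thesis using K by blast
qed


lemma main_conv:
  fixes \<rho> :: "real^'d \<Rightarrow> real" and \<Omega> :: "(real^'d) set"
    and \<nu> :: "'k \<Rightarrow> ((real^'d) \<times> (real^'n)) measure"
  assumes rho: "mollifier \<rho>" and eps: "\<epsilon> > 0" and L: "L \<ge> 0"
    and ev: "eventually (\<lambda>k. \<nu> k \<in> Prob (Xset \<Omega> L)) F"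
    and n0: "\<nu>0 \<in> Prob (Xset \<Omega> L)"
    and lim: "((\<lambda>k. W1 (\<nu> k) \<nu>0) \<longlongrightarrow> 0) F"
  shows "uniform_limit (closure \<Omega>) (\<lambda>k. Feps \<rho> \<Omega> \<epsilon> (\<nu> k)) (Feps \<rho> \<Omega> \<epsilon> \<nu>0) F"
  unfolding uniform_limit_iff
proof (intro allI impI)
  fix r :: real assume r: "r > 0"
  define c where "c = measure lborel \<Omega> / \<epsilon> ^ CARD('d)"
  have c: "c \<ge> 0" unfolding c_def using eps by simp
  define e where "e = r / (c + 1) / 2"
  have e: "e > 0" unfolding e_def using r c by simp
  define F0 where "F0 = (\<lambda>x (p::(real^'d) \<times> (real^'n)). \<rho> ((1/\<epsilon>) *\<^sub>R (fst p - x)) *\<^sub>R snd p)"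
  obtain K where K: "K \<ge> 0" and lip: "\<forall>x. \<forall>p\<in>Xset \<Omega> L. \<forall>q\<in>(Xset \<Omega> L :: ((real^'d) \<times> (real^'n)) set).
           norm (F0 x p - F0 x q) \<le> e + K * dist p q"
    using f_props[OF rho eps L e, where \<Omega>=\<Omega>] unfolding F0_def by blast
  obtain M where M: "M \<ge> 0" "\<forall>y. \<bar>\<rho> y\<bar> \<le> M" using rho_bounded[OF rho] by blast
  have bnd: "\<forall>p\<in>Xset \<Omega> L. norm (F0 x p) \<le> M * (real CARD('n) * L)" for x
  proof
    fix p :: "(real^'d) \<times> (real^'n)" assume p: "p \<in> Xset \<Omega> L"
    have "norm (snd p) \<le> real CARD('n) * L" using p by (intro Lbox_norm) (auto simp: Xset_def)
    then show "norm (F0 x p) \<le> M * (real CARD('n) * L)"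
      unfolding F0_def using M by (auto intro: mult_mono)
  qed
  have cont: "continuous_on UNIV \<rho>" by (rule rho_basic(1)[OF rho])
  have fm: "F0 x \<in> borel_measurable borel" for x
    unfolding F0_def
    by (intro borel_measurable_continuous_onI continuous_intros continuous_on_compose2[OF cont]) auto
  have Xm: "Xset \<Omega> L \<in> sets borel" using Xset_closed by (rule borel_closed)
  define \<delta> where "\<delta> = e / (K + 1)"
  have \<delta>: "\<delta> > 0" unfolding \<delta>_def using e K by simp
  have Kd: "K * \<delta> \<le> e"
  proof -
    have "K * \<delta> = (K / (K + 1)) * e" unfolding \<delta>_def by simp
    also have "\<dots> \<le> 1 * e" using K e by (intro mult_right_mono) auto
    finally show ?thesis by simp
  qed
  have "eventually (\<lambda>k. W1 (\<nu> k) \<nu>0 < ennreal \<delta>) F"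
    using order_tendstoD(2)[OF lim] \<delta> by simp
  with ev show "eventually (\<lambda>k. \<forall>x\<in>closure \<Omega>. dist (Feps \<rho> \<Omega> \<epsilon> (\<nu> k) x) (Feps \<rho> \<Omega> \<epsilon> \<nu>0 x) < r) F"
  proof eventually_elim
    case (elim k)
    then obtain \<pi> where pi: "\<pi> \<in> couplings (\<nu> k) \<nu>0"
      and cost: "(\<integral>\<^sup>+ p. ennreal (dist (fst p) (snd p)) \<partial>\<pi>) < ennreal \<delta>"
      unfolding W1_def INF_less_iff by blast
    show ?case
    proof
      fix x assume "x \<in> closure \<Omega>"
      have lipx: "\<forall>p\<in>Xset \<Omega> L. \<forall>q\<in>Xset \<Omega> L. norm (F0 x p - F0 x q) \<le> e + K * dist p q"
        using lip by blast
      have b: "ennreal (norm (integral\<^sup>L (\<nu> k) (F0 x) - integral\<^sup>L \<nu>0 (F0 x)))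
           \<le> ennreal e + ennreal K * (\<integral>\<^sup>+ p. ennreal (dist (fst p) (snd p)) \<partial>\<pi>)"
        using coupling_bound[OF elim(1) n0 Xm fm bnd lipx _ K pi] e by simp
      also have "\<dots> \<le> ennreal e + ennreal K * ennreal \<delta>"
        using cost by (intro add_left_mono mult_left_mono) auto
      also have "\<dots> = ennreal (e + K * \<delta>)"
        using e K \<delta> by (simp add: ennreal_plus ennreal_mult)
      finally have nb: "norm (integral\<^sup>L (\<nu> k) (F0 x) - integral\<^sup>L \<nu>0 (F0 x)) \<le> e + K * \<delta>"
        using e K \<delta> by (subst (asm) ennreal_le_iff) auto
      have "dist (Feps \<rho> \<Omega> \<epsilon> (\<nu> k) x) (Feps \<rho> \<Omega> \<epsilon> \<nu>0 x)
          = c * norm (integral\<^sup>L (\<nu> k) (F0 x) - integral\<^sup>L \<nu>0 (F0 x))"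
      proof -
        have fe: "Feps \<rho> \<Omega> \<epsilon> \<gamma> x = c *\<^sub>R integral\<^sup>L \<gamma> (F0 x)" for \<gamma>
          by (simp add: Feps_def F0_def c_def)
        have "dist (c *\<^sub>R A) (c *\<^sub>R B) = c * norm (A - B)" for A B :: "real^'n"
          using c by (simp add: dist_norm flip: scaleR_diff_right)
        then show ?thesis unfolding fe .
      qed
      also have "\<dots> \<le> c * (e + e)" using nb Kd c by (intro mult_left_mono) auto
      also have "\<dots> = r * (c / (c + 1))"
      proof -
        have cp: "c + 1 \<noteq> 0" "2 * c + 2 \<noteq> 0" using c by linarith+
        have "e + e = r / (c + 1)" unfolding e_def by (rule field_sum_of_halves)
        then show ?thesis by simp
      qed
      also have "\<dots> < r * 1" using r c by (intro mult_strict_left_mono) auto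
      finally show "dist (Feps \<rho> \<Omega> \<epsilon> (\<nu> k) x) (Feps \<rho> \<Omega> \<epsilon> \<nu>0 x) < r" by simp
    qed
  qed
qed

theorem propositionF1:
  fixes \<Omega> :: "(real^'d) set" and L \<epsilon> :: real and N :: nat
    and xb :: "nat \<Rightarrow> real^'d" and \<rho> :: "real^'d \<Rightarrow> real"
    and G :: "((real^'d) \<times> (real^'n)) measure \<Rightarrow> ((real^'d) \<times> (real^'n)) measure"
  assumes "open \<Omega>" and "bounded \<Omega>" and "L > 0" and "\<epsilon> > 0" and "N \<ge> 1"
    and "\<forall>j\<in>{1..N}. xb j \<in> \<Omega>"
    and "mollifier \<rho>"
    and "\<forall>\<mu>\<in>Prob (Xset \<Omega> L). G \<mu> \<in> Prob (Xset \<Omega> L)"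
  shows
    "(\<forall>Gs :: nat \<Rightarrow> ((real^'d) \<times> (real^'n)) measure \<Rightarrow> ((real^'d) \<times> (real^'n)) measure.
        (\<forall>k. \<forall>\<mu>\<in>Prob (Xset \<Omega> L). Gs k \<mu> \<in> Prob (Xset \<Omega> L))
        \<and> (\<forall>\<mu>\<in>Prob (Xset \<Omega> L). (\<lambda>k. W1 (Gs k \<mu>) (G \<mu>)) \<longlonglongrightarrow> 0)
        \<longrightarrow> (\<forall>h. continuous_on (closure \<Omega>) h \<and> h ` closure \<Omega> \<subseteq> Lbox L \<longrightarrow>
              uniform_limit (closure \<Omega>)
                (\<lambda>k. Feps \<rho> \<Omega> \<epsilon> (Gs k (empirical N xb h)))
                (Feps \<rho> \<Omega> \<epsilon> (G (empirical N xb h))) sequentially))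
     \<and>
     (\<forall>Ge :: real \<Rightarrow> ((real^'d) \<times> (real^'n)) measure \<Rightarrow> ((real^'d) \<times> (real^'n)) measure.
        (\<forall>\<eta>>0. \<forall>\<mu>\<in>Prob (Xset \<Omega> L). Ge \<eta> \<mu> \<in> Prob (Xset \<Omega> L))
        \<and> (\<forall>\<mu>\<in>Prob (Xset \<Omega> L). ((\<lambda>\<eta>. W1 (Ge \<eta> \<mu>) (G \<mu>)) \<longlongrightarrow> 0) (at_right 0))
        \<longrightarrow> (\<forall>h. continuous_on (closure \<Omega>) h \<and> h ` closure \<Omega> \<subseteq> Lbox L \<longrightarrow>
              uniform_limit (closure \<Omega>)
                (\<lambda>\<eta>. Feps \<rho> \<Omega> \<epsilon> (Ge \<eta> (empirical N xb h)))
                (Feps \<rho> \<Omega> \<epsilon> (G (empirical N xb h))) (at_right 0)))"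
proof -
  have L0: "L \<ge> 0" using assms(3) by simp
  have emp: "empirical N xb h \<in> Prob (Xset \<Omega> L)"
    if h: "h ` closure \<Omega> \<subseteq> Lbox L" for h :: "real^'d \<Rightarrow> real^'n"
  proof (rule empirical_Prob[OF assms(5)])
    show "\<forall>j\<in>{1..N}. (xb j, h (xb j)) \<in> Xset \<Omega> L"
    proof
      fix j assume "j \<in> {1..N}"
      then have "xb j \<in> closure \<Omega>" using assms(6) closure_subset by blast
      then show "(xb j, h (xb j)) \<in> Xset \<Omega> L" using h unfolding Xset_def by auto
    qed
    show "Xset \<Omega> L \<in> sets borel" using Xset_closed by (rule borel_closed)
  qed
  show ?thesis
  proof (intro conjI allI impI)
    fix Gs :: "nat \<Rightarrow> ((real^'d) \<times> (real^'n)) measure \<Rightarrow> ((real^'d) \<times> (real^'n)) measure"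
      and h :: "real^'d \<Rightarrow> real^'n"
    assume A: "(\<forall>k. \<forall>\<mu>\<in>Prob (Xset \<Omega> L). Gs k \<mu> \<in> Prob (Xset \<Omega> L))
        \<and> (\<forall>\<mu>\<in>Prob (Xset \<Omega> L). (\<lambda>k. W1 (Gs k \<mu>) (G \<mu>)) \<longlonglongrightarrow> 0)"
      and H: "continuous_on (closure \<Omega>) h \<and> h ` closure \<Omega> \<subseteq> Lbox L"
    have e: "empirical N xb h \<in> Prob (Xset \<Omega> L)" using emp H by blast
    show "uniform_limit (closure \<Omega>)
                (\<lambda>k. Feps \<rho> \<Omega> \<epsilon> (Gs k (empirical N xb h)))
                (Feps \<rho> \<Omega> \<epsilon> (G (empirical N xb h))) sequentially"
      by (rule main_conv[OF assms(7) assms(4) L0]) (use A e assms(8) in auto)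
  next
    fix Ge :: "real \<Rightarrow> ((real^'d) \<times> (real^'n)) measure \<Rightarrow> ((real^'d) \<times> (real^'n)) measure"
      and h :: "real^'d \<Rightarrow> real^'n"
    assume A: "(\<forall>\<eta>>0. \<forall>\<mu>\<in>Prob (Xset \<Omega> L). Ge \<eta> \<mu> \<in> Prob (Xset \<Omega> L))
        \<and> (\<forall>\<mu>\<in>Prob (Xset \<Omega> L). ((\<lambda>\<eta>. W1 (Ge \<eta> \<mu>) (G \<mu>)) \<longlongrightarrow> 0) (at_right 0))"
      and H: "continuous_on (closure \<Omega>) h \<and> h ` closure \<Omega> \<subseteq> Lbox L"
    have e: "empirical N xb h \<in> Prob (Xset \<Omega> L)" using emp H by blast
    have ev: "eventually (\<lambda>\<eta>::real. \<eta> > 0) (at_right 0)" by (rule eventually_at_right_less)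
    show "uniform_limit (closure \<Omega>)
                (\<lambda>\<eta>. Feps \<rho> \<Omega> \<epsilon> (Ge \<eta> (empirical N xb h)))
                (Feps \<rho> \<Omega> \<epsilon> (G (empirical N xb h))) (at_right 0)"
    proof (rule main_conv[OF assms(7) assms(4) L0])
      show "\<forall>\<^sub>F \<eta> in at_right 0. Ge \<eta> (empirical N xb h) \<in> Prob (Xset \<Omega> L)"
        using ev by eventually_elim (use A e in auto)
    qed (use A e assms(8) in auto)
  qed
qed

end
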